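(* Assume that $\Pr[\mathit{QH} > 1/\Delta] \leq \varepsilon$. Then the procedure $\mathbf{Detect}(U,\Delta,\varepsilon)$ accepts $\ket{\psi}$ with probability $\|\psi\|^2-\delta_0^2-\mathrm{O}(\varepsilon)$, and with probability $0$ if $|\delta_0|=\|\psi\|$. In addition, the number of applications of the controlled operator $\text{c-}U$ is $\mathrm{O}(\log(1/\varepsilon)/\Delta)$.
   Context: Let $U$ be a unitary matrix with real entries. Its eigenvalues are $1$, $-1$, and pairs of conjugate complex numbers $(e^{i\alpha_j},e^{-i\alpha_j})$ with $0<\alpha_j<\pi$, $1\le j\le J$. Let $\ket{\psi}$ be a vector with real entries and norm at most one; it decomposes uniquely as $\ket{\psi}=\delta_0\ket{w_0}+\sum_{1\le j\le J}\delta_j(\ket{w_j^+}+\ket{w_j^-})+\delta_{-1}\ket{w_{-1}}$, where $\delta_0,\delta_{-1},\delta_j$ are reals, $\ket{w_0}$ is a unit eigenvector of $U$ with eigenvalue $1$, $\ket{w_{-1}}$ a unit eigenvector with eigenvalue $-1$, and $\ket{w_j^\pm}$ unit eigenvectors with eigenvalues $e^{\pm i\alpha_j}$, $\ket{w_j^-}=\overline{\ket{w_j^+}}$. Let $\mathit{QH}$ be the random variable taking value $1/\alpha_j$ with probability $2\delta_j^2$, value $1/\pi$ with probability $\delta_{-1}^2$, and $0$ otherwise (probabilities sum to $\|\psi\|^2$). Let $\mathbf{Estimate}$ be the phase estimation circuit (Kitaev; Cleve et al.) which, given an eigenvector of $U$ with eigenvalue $e^{i\alpha}$, determines $\alpha\in(-\pi,\pi]$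 with precision $\Delta$ and error probability at most $1/3$, determines $\alpha=0$ with probability $1$ on a $1$-eigenvector, and uses $\mathrm{O}(1/\Delta)$ calls to $\text{c-}U$ and its inverse. The procedure $\mathbf{Detect}(U,\Delta,\varepsilon)$ on input $\ket{\psi}$: apply $\Theta(\log(1/\varepsilon))$ times $\mathbf{Estimate}$ for $U$ with precision $\Delta$ to the same state $\ket{\psi}$; if at least one estimated phase is nonzero, accept, otherwise reject. *)

theory Defs
  imports Complex_Main "HOL-Library.FuncSet"
begin

(* Vectors of C^n are modelled as functions nat => complex, only indices < n matter;
   n x n matrices as nat => nat => complex. *)

definition vnorm2 :: "nat \<Rightarrow> (nat \<Rightarrow> complex) \<Rightarrow> real" where
  "vnorm2 n v = (\<Sum>x<n. (cmod (v x))^2)"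

definition mat_vec :: "nat \<Rightarrow> (nat \<Rightarrow> nat \<Rightarrow> complex) \<Rightarrow> (nat \<Rightarrow> complex) \<Rightarrow> nat \<Rightarrow> complex" where
  "mat_vec n U v x = (\<Sum>y<n. U x y * v y)"

definition is_eigvec :: "nat \<Rightarrow> (nat \<Rightarrow> nat \<Rightarrow> complex) \<Rightarrow> complex \<Rightarrow> (nat \<Rightarrow> complex) \<Rightarrow> bool" where
  "is_eigvec n U lam v \<longleftrightarrow> (\<forall>x<n. mat_vec n U v x = lam * v x)"

definition unitary_mat :: "nat \<Rightarrow> (nat \<Rightarrow> nat \<Rightarrow> complex) \<Rightarrow> bool" where
  "unitary_mat n U \<longleftrightarrow>
     (\<forall>i<n. \<forall>j<n. (\<Sum>k<n. cnj (U k i) * U k j) = (if i = j then 1 else 0))"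

definition real_mat :: "nat \<Rightarrow> (nat \<Rightarrow> nat \<Rightarrow> complex) \<Rightarrow> bool" where
  "real_mat n U \<longleftrightarrow> (\<forall>i<n. \<forall>j<n. Im (U i j) = 0)"

definition real_vec :: "nat \<Rightarrow> (nat \<Rightarrow> complex) \<Rightarrow> bool" where
  "real_vec n v \<longleftrightarrow> (\<forall>x<n. Im (v x) = 0)"

(* A unit eigenvector is only required for a component
   whose coefficient is nonzero (a zero component contributes nothing). *)
definition spectral_decomp ::
  "nat \<Rightarrow> (nat \<Rightarrow> nat \<Rightarrow> complex) \<Rightarrow> (nat \<Rightarrow> complex) \<Rightarrow>
   real \<Rightarrow> (nat \<Rightarrow> complex) \<Rightarrow> nat \<Rightarrow> (nat \<Rightarrow> real) \<Rightarrow> (nat \<Rightarrow> real) \<Rightarrow>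
   (nat \<Rightarrow> nat \<Rightarrow> complex) \<Rightarrow> real \<Rightarrow> (nat \<Rightarrow> complex) \<Rightarrow> bool" where
  "spectral_decomp n U \<psi> d0 w0 J d a wp dm1 wm1 \<longleftrightarrow>
     (d0 \<noteq> 0 \<longrightarrow> is_eigvec n U 1 w0 \<and> vnorm2 n w0 = 1) \<and>
     (dm1 \<noteq> 0 \<longrightarrow> is_eigvec n U (-1) wm1 \<and> vnorm2 n wm1 = 1) \<and>
     (\<forall>j\<in>{1..J}. 0 < a j \<and> a j < pi) \<and> inj_on a {1..J} \<and>
     (\<forall>j\<in>{1..J}. d j \<noteq> 0 \<longrightarrow>
         is_eigvec n U (cis (a j)) (wp j) \<and> vnorm2 n (wp j) = 1 \<and>
         is_eigvec n U (cis (- a j)) (\<lambda>x. cnj (wp j x)) \<and>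
         vnorm2 n (\<lambda>x. cnj (wp j x)) = 1) \<and>
     (\<forall>x<n. \<psi> x = of_real d0 * w0 x
                 + (\<Sum>j\<in>{1..J}. of_real (d j) * (wp j x + cnj (wp j x)))
                 + of_real dm1 * wm1 x)"

(* Pr[QH > t], where QH takes value 1/a_j with prob 2 d_j^2, 1/pi with prob dm1^2,
   and 0 with the remaining probability d0^2. *)
definition QH_tail :: "nat \<Rightarrow> (nat \<Rightarrow> real) \<Rightarrow> (nat \<Rightarrow> real) \<Rightarrow> real \<Rightarrow> real \<Rightarrow> real \<Rightarrow> real" where
  "QH_tail J d a dm1 d0 t =
     (\<Sum>j\<in>{j\<in>{1..J}. 1 / a j > t}. 2 * (d j)^2)
     + (if 1 / pi > t then dm1^2 else 0)
     + (if 0 > t then d0^2 else 0)"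

definition phase_dist :: "real \<Rightarrow> real \<Rightarrow> real" where
  "phase_dist \<alpha> \<beta> = \<bar>Arg (cis (\<alpha> - \<beta>))\<bar>"

(* Phase estimation circuit Estimate with precision Delta: ancilla register with
   computational basis {0..<m}; on input (eigenvector w with eigenvalue cis alpha) (x) |0>
   it outputs w (x) phi alpha; measuring basis state b yields the estimate dec b. *)
definition estimate_spec :: "nat \<Rightarrow> (real \<Rightarrow> nat \<Rightarrow> complex) \<Rightarrow> (nat \<Rightarrow> real) \<Rightarrow> real \<Rightarrow> bool" where
  "estimate_spec m \<phi> dec \<Delta> \<longleftrightarrow>
     (\<forall>b<m. - pi < dec b \<and> dec b \<le> pi) \<and>
     (\<forall>\<alpha>. (\<Sum>b<m. (cmod (\<phi> \<alpha> b))^2) = 1) \<and>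
     (\<Sum>b\<in>{b. b < m \<and> dec b \<noteq> 0}. (cmod (\<phi> 0 b))^2) = 0 \<and>
     (\<forall>\<alpha>. - pi < \<alpha> \<and> \<alpha> \<le> pi \<longrightarrow>
        (\<Sum>b\<in>{b. b < m \<and> phase_dist (dec b) \<alpha> < \<Delta>}. (cmod (\<phi> \<alpha> b))^2) \<ge> 2/3)"

definition phase_prod :: "(real \<Rightarrow> nat \<Rightarrow> complex) \<Rightarrow> nat \<Rightarrow> real \<Rightarrow> (nat \<Rightarrow> nat) \<Rightarrow> complex" where
  "phase_prod \<phi> k \<alpha> s = (\<Prod>i<k. \<phi> \<alpha> (s i))"

(* amplitude of basis state x (x) s_0 (x) ... (x) s_{k-1} after k applications of Estimate
   (each on a fresh ancilla register) to psi, by linearity over the eigen-decomposition *)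
definition detect_amp ::
  "(real \<Rightarrow> nat \<Rightarrow> complex) \<Rightarrow> nat \<Rightarrow> real \<Rightarrow> (nat \<Rightarrow> complex) \<Rightarrow> nat \<Rightarrow> (nat \<Rightarrow> real) \<Rightarrow>
   (nat \<Rightarrow> real) \<Rightarrow> (nat \<Rightarrow> nat \<Rightarrow> complex) \<Rightarrow> real \<Rightarrow> (nat \<Rightarrow> complex) \<Rightarrow>
   nat \<Rightarrow> (nat \<Rightarrow> nat) \<Rightarrow> complex" where
  "detect_amp \<phi> k d0 w0 J d a wp dm1 wm1 x s =
     of_real d0 * w0 x * phase_prod \<phi> k 0 s
     + (\<Sum>j\<in>{1..J}. of_real (d j) *
          (wp j x * phase_prod \<phi> k (a j) s + cnj (wp j x) * phase_prod \<phi> k (- a j) s))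
     + of_real dm1 * wm1 x * phase_prod \<phi> k pi s"

(* Detect accepts iff at least one of the k estimated phases is nonzero (Born rule) *)
definition detect_accept_prob ::
  "nat \<Rightarrow> nat \<Rightarrow> (nat \<Rightarrow> real) \<Rightarrow> (real \<Rightarrow> nat \<Rightarrow> complex) \<Rightarrow> nat \<Rightarrow>
   real \<Rightarrow> (nat \<Rightarrow> complex) \<Rightarrow> nat \<Rightarrow> (nat \<Rightarrow> real) \<Rightarrow>
   (nat \<Rightarrow> real) \<Rightarrow> (nat \<Rightarrow> nat \<Rightarrow> complex) \<Rightarrow> real \<Rightarrow> (nat \<Rightarrow> complex) \<Rightarrow> real" where
  "detect_accept_prob n m dec \<phi> k d0 w0 J d a wp dm1 wm1 =
     (\<Sum>x<n. \<Sum>s\<in>{s \<in> PiE {..<k} (\<lambda>_. {..<m}). \<exists>i<k. dec (s i) \<noteq> 0}.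
        (cmod (detect_amp \<phi> k d0 w0 J d a wp dm1 wm1 x s))^2)"

end

theory Submission
  imports Defs
begin


lemma unitary_inner:
  assumes "unitary_mat n U"
  shows "(\<Sum>x<n. cnj (mat_vec n U w x) * mat_vec n U v x) = (\<Sum>y<n. cnj (w y) * v y)"
proof -
  let ?F = "\<lambda>x y z. cnj (w y) * v z * (cnj (U x y) * U x z)"
  have "(\<Sum>x<n. cnj (mat_vec n U w x) * mat_vec n U v x)
      = (\<Sum>x<n. \<Sum>y<n. \<Sum>z<n. ?F x y z)"
    unfolding mat_vec_def cnj_sum sum_product by (simp add: mult_ac)
  also have "\<dots> = (\<Sum>y<n. \<Sum>x<n. \<Sum>z<n. ?F x y z)"
    by (rule sum.swap)
  also have "\<dots> = (\<Sum>y<n. \<Sum>z<n. \<Sum>x<n. ?F x y z)"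
    by (rule sum.cong[OF refl], rule sum.swap)
  also have "\<dots> = (\<Sum>y<n. \<Sum>z<n. cnj (w y) * v z * (\<Sum>x<n. cnj (U x y) * U x z))"
    by (simp only: sum_distrib_left)
  also have "\<dots> = (\<Sum>y<n. \<Sum>z<n. if y = z then cnj (w y) * v z else 0)"
    using assms unfolding unitary_mat_def by (intro sum.cong refl) auto
  also have "\<dots> = (\<Sum>y<n. cnj (w y) * v y)"
    by (simp add: sum.delta)
  finally show ?thesis .
qed

lemma eig_orth:
  assumes "unitary_mat n U" "is_eigvec n U l v" "is_eigvec n U mu w" "l \<noteq> mu" "cmod mu = 1"
  shows "(\<Sum>y<n. cnj (w y) * v y) = 0"
proof -
  have "(\<Sum>y<n. cnj (w y) * v y) = (\<Sum>x<n. cnj (mu * w x) * (l * v x))"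
    using unitary_inner[OF assms(1), of w v] assms(2,3) unfolding is_eigvec_def
    by (metis (no_types, lifting) lessThan_iff sum.cong)
  also have "\<dots> = cnj mu * l * (\<Sum>y<n. cnj (w y) * v y)"
    by (simp add: sum_distrib_left mult_ac)
  finally have "(1 - cnj mu * l) * (\<Sum>y<n. cnj (w y) * v y) = 0"
    by (simp add: algebra_simps)
  moreover have "cnj mu * l \<noteq> 1"
  proof
    assume "cnj mu * l = 1"
    hence "mu * (cnj mu * l) = mu" by simp
    moreover have "mu * cnj mu = 1" using assms(5)
      by (metis complex_norm_square of_real_1 power_one)
    ultimately have "l = mu" by (simp add: mult.assoc[symmetric])
    thus False using assms(4) by simp
  qed
  ultimately show ?thesis by simp
qed

lemma pyth:
  fixes c :: "'i \<Rightarrow> complex" and v :: "'i \<Rightarrow> nat \<Rightarrow> complex"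
  assumes "finite T"
    and orth: "\<And>i j. i \<in> T \<Longrightarrow> j \<in> T \<Longrightarrow> (\<Sum>x<n. cnj (v j x) * v i x) = (if i = j then 1 else 0)"
  shows "(\<Sum>x<n. (cmod (\<Sum>i\<in>T. c i * v i x))^2) = (\<Sum>i\<in>T. (cmod (c i))^2)"
proof -
  let ?F = "\<lambda>x i j. c i * cnj (c j) * (cnj (v j x) * v i x)"
  have "complex_of_real (\<Sum>x<n. (cmod (\<Sum>i\<in>T. c i * v i x))^2)
     = (\<Sum>x<n. (\<Sum>i\<in>T. c i * v i x) * cnj (\<Sum>j\<in>T. c j * v j x))"
    unfolding of_real_sum complex_norm_square by (rule refl)
  also have "\<dots> = (\<Sum>x<n. \<Sum>i\<in>T. \<Sum>j\<in>T. ?F x i j)"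
    unfolding cnj_sum sum_product by (simp add: mult_ac)
  also have "\<dots> = (\<Sum>i\<in>T. \<Sum>x<n. \<Sum>j\<in>T. ?F x i j)"
    by (rule sum.swap)
  also have "\<dots> = (\<Sum>i\<in>T. \<Sum>j\<in>T. \<Sum>x<n. ?F x i j)"
    by (rule sum.cong[OF refl], rule sum.swap)
  also have "\<dots> = (\<Sum>i\<in>T. \<Sum>j\<in>T. c i * cnj (c j) * (\<Sum>x<n. cnj (v j x) * v i x))"
    by (simp only: sum_distrib_left)
  also have "\<dots> = (\<Sum>i\<in>T. \<Sum>j\<in>T. if i = j then c i * cnj (c j) else 0)"
    using orth by (intro sum.cong refl) auto
  also have "\<dots> = (\<Sum>i\<in>T. c i * cnj (c i))"
    using assms(1) by (simp add: sum.delta)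
  also have "\<dots> = complex_of_real (\<Sum>i\<in>T. (cmod (c i))^2)"
    unfolding of_real_sum complex_norm_square by (rule refl)
  finally show ?thesis using of_real_eq_iff by blast
qed

lemma prod_PiE_pow:
  fixes g :: "nat \<Rightarrow> real"
  assumes "finite B"
  shows "(\<Sum>s\<in>PiE {..<k} (\<lambda>_. B). \<Prod>l<k. g (s l)) = (\<Sum>b\<in>B. g b)^k"
  using prod_sum_PiE[of "{..<k}" "\<lambda>_. B" "\<lambda>_ b. g b"] assms by simp

definition phx :: "nat \<Rightarrow> (nat \<Rightarrow> real) \<Rightarrow> nat \<Rightarrow> real" where
  "phx J a i = (if i = 0 then 0 else if i \<le> J then a i else if i \<le> 2*J then - a (i - J) else pi)"

definition cox :: "nat \<Rightarrow> real \<Rightarrow> (nat \<Rightarrow> real) \<Rightarrow> real \<Rightarrow> nat \<Rightarrow> real" where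
  "cox J d0 d dm1 i = (if i = 0 then d0 else if i \<le> J then d i else if i \<le> 2*J then d (i - J) else dm1)"

definition vex :: "nat \<Rightarrow> (nat \<Rightarrow> complex) \<Rightarrow> (nat \<Rightarrow> nat \<Rightarrow> complex) \<Rightarrow> (nat \<Rightarrow> complex) \<Rightarrow> nat \<Rightarrow> nat \<Rightarrow> complex" where
  "vex J w0 wp wm1 i = (if i = 0 then w0 else if i \<le> J then wp i else if i \<le> 2*J then (\<lambda>x. cnj (wp (i - J) x)) else wm1)"

lemma reidx:
  fixes G :: "real \<Rightarrow> (nat \<Rightarrow> complex) \<Rightarrow> real \<Rightarrow> 'b::comm_monoid_add"
  shows "(\<Sum>i\<le>2*J+1. G (cox J dz d dmo i) (vex J wz wp wmo i) (phx J a i))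
     = G dz wz 0 + (\<Sum>j\<in>{1..J}. G (d j) (wp j) (a j) + G (d j) (\<lambda>x. cnj (wp j x)) (- a j))
       + G dmo wmo pi"
proof -
  let ?g = "\<lambda>i. G (cox J dz d dmo i) (vex J wz wp wmo i) (phx J a i)"
  have S: "{..2*J+1} = insert 0 (insert (2*J+1) ({1..J} \<union> {1+J..J+J}))" by auto
  have f: "finite ({1..J} \<union> {1+J..J+J})" by simp
  have d1: "0 \<notin> insert (2*J+1) ({1..J} \<union> {1+J..J+J})" by auto
  have d2: "2*J+1 \<notin> {1..J} \<union> {1+J..J+J}" by auto
  have d3: "{1..J} \<inter> {1+J..J+J} = {}" by auto
  have e1: "(\<Sum>i\<le>2*J+1. ?g i) = ?g 0 + (\<Sum>i\<in>insert (2*J+1) ({1..J} \<union> {1+J..J+J}). ?g i)"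
    unfolding S by (rule sum.insert) (use f d1 in auto)
  have e2: "(\<Sum>i\<in>insert (2*J+1) ({1..J} \<union> {1+J..J+J}). ?g i) = ?g (2*J+1) + (\<Sum>i\<in>{1..J} \<union> {1+J..J+J}. ?g i)"
    by (rule sum.insert) (use f d2 in auto)
  have e3: "(\<Sum>i\<in>{1..J} \<union> {1+J..J+J}. ?g i) = (\<Sum>i\<in>{1..J}. ?g i) + (\<Sum>i\<in>{1+J..J+J}. ?g i)"
    by (rule sum.union_disjoint) (use d3 in auto)
  have e4: "(\<Sum>i\<in>{1+J..J+J}. ?g i) = (\<Sum>j\<in>{1..J}. ?g (j + J))"
    by (rule sum.shift_bounds_cl_nat_ivl)
  have e5: "(\<Sum>j\<in>{1..J}. ?g (j + J)) = (\<Sum>j\<in>{1..J}. G (d j) (\<lambda>x. cnj (wp j x)) (- a j))"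
    by (intro sum.cong refl) (auto simp: cox_def vex_def phx_def)
  have e6: "(\<Sum>i\<in>{1..J}. ?g i) = (\<Sum>j\<in>{1..J}. G (d j) (wp j) (a j))"
    by (intro sum.cong refl) (auto simp: cox_def vex_def phx_def)
  have e7: "?g 0 = G dz wz 0" by (simp add: cox_def vex_def phx_def)
  have e8: "?g (2*J+1) = G dmo wmo pi" by (simp add: cox_def vex_def phx_def)
  show ?thesis unfolding e1 e2 e3 e4 e5 e6 e7 e8 sum.distrib by (simp only: add.assoc add.commute add.left_commute)
qed

lemma phx_range:
  assumes "spectral_decomp n U \<psi> d0 w0 J d a wp dm1 wm1" "i \<le> 2*J+1"
  shows "- pi < phx J a i \<and> phx J a i \<le> pi"
proof -
  have A: "\<And>j. j \<in> {1..J} \<Longrightarrow> 0 < a j \<and> a j < pi" using assms(1) unfolding spectral_decomp_def by blast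
  show ?thesis
  proof (cases "i = 0")
    case True thus ?thesis by (simp add: phx_def)
  next
    case F: False
    show ?thesis
    proof (cases "i \<le> J")
      case True thus ?thesis using F A[of i] by (simp add: phx_def)
    next
      case F2: False
      show ?thesis
      proof (cases "i \<le> 2*J")
        case True
        hence "i - J \<in> {1..J}" using F2 by auto
        with A have "0 < a (i - J) \<and> a (i - J) < pi" by blast
        thus ?thesis using F F2 True by (simp add: phx_def)
      next
        case False thus ?thesis using F F2 by (simp add: phx_def)
      qed
    qed
  qed
qed

lemma phx_cases:
  assumes "spectral_decomp n U \<psi> d0 w0 J d a wp dm1 wm1" "i \<le> 2*J+1"
  shows "(i = 0 \<and> phx J a i = 0) \<or> (i \<in> {1..J} \<and> phx J a i = a i \<and> 0 < a i \<and> a i < pi)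
    \<or> (J < i \<and> i \<le> 2*J \<and> i - J \<in> {1..J} \<and> phx J a i = - a (i - J) \<and> 0 < a (i - J) \<and> a (i - J) < pi)
    \<or> (i = 2*J+1 \<and> phx J a i = pi)"
proof -
  have A: "\<And>j. j \<in> {1..J} \<Longrightarrow> 0 < a j \<and> a j < pi" using assms(1) unfolding spectral_decomp_def by blast
  show ?thesis
  proof (cases "i = 0")
    case True thus ?thesis by (simp add: phx_def)
  next
    case F: False
    show ?thesis
    proof (cases "i \<le> J")
      case True
      hence "i \<in> {1..J}" using F by auto
      with A have "0 < a i \<and> a i < pi" by blast
      thus ?thesis using F True \<open>i \<in> {1..J}\<close> by (simp add: phx_def)
    next
      case F2: False
      show ?thesis
      proof (cases "i \<le> 2*J")
        case True
        hence "i - J \<in> {1..J}" using F2 by auto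
        with A have "0 < a (i - J) \<and> a (i - J) < pi" by blast
        thus ?thesis using F F2 True \<open>i - J \<in> {1..J}\<close> by (simp add: phx_def)
      next
        case False thus ?thesis using F F2 assms(2) by (simp add: phx_def)
      qed
    qed
  qed
qed

lemma phx_inj:
  assumes "spectral_decomp n U \<psi> d0 w0 J d a wp dm1 wm1" "i \<le> 2*J+1" "i' \<le> 2*J+1"
    "phx J a i = phx J a i'"
  shows "i = i'"
proof -
  have I: "inj_on a {1..J}"
    using assms(1) unfolding spectral_decomp_def by blast
  show ?thesis
    using phx_cases[OF assms(1,2)] phx_cases[OF assms(1,3)] assms(4)
    apply (elim disjE conjE)
    apply simp_all
    subgoal using inj_onD[OF I, of i i'] by simp
    subgoal using inj_onD[OF I, of "i - J" "i' - J"] by simp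
    done
qed

lemma comp_eig:
  assumes "spectral_decomp n U \<psi> d0 w0 J d a wp dm1 wm1" "i \<le> 2*J+1" "cox J d0 d dm1 i \<noteq> 0"
  shows "is_eigvec n U (cis (phx J a i)) (vex J w0 wp wm1 i) \<and> vnorm2 n (vex J w0 wp wm1 i) = 1"
proof -
  have D0: "d0 \<noteq> 0 \<Longrightarrow> is_eigvec n U 1 w0 \<and> vnorm2 n w0 = 1"
   and Dm: "dm1 \<noteq> 0 \<Longrightarrow> is_eigvec n U (-1) wm1 \<and> vnorm2 n wm1 = 1"
   and Dj: "\<And>j. j \<in> {1..J} \<Longrightarrow> d j \<noteq> 0 \<Longrightarrow>
         is_eigvec n U (cis (a j)) (wp j) \<and> vnorm2 n (wp j) = 1 \<and>
         is_eigvec n U (cis (- a j)) (\<lambda>x. cnj (wp j x)) \<and>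
         vnorm2 n (\<lambda>x. cnj (wp j x)) = 1"
    using assms(1) unfolding spectral_decomp_def by blast+
  from phx_cases[OF assms(1,2)] show ?thesis
  proof (elim disjE conjE)
    assume h: "i = 0" "phx J a i = 0"
    have "cox J d0 d dm1 i = d0" "vex J w0 wp wm1 i = w0" using h by (simp_all add: cox_def vex_def)
    thus ?thesis using D0 assms(3) h(2) by simp
  next
    assume h: "i \<in> {1..J}" "phx J a i = a i"
    have "cox J d0 d dm1 i = d i" "vex J w0 wp wm1 i = wp i" using h by (auto simp add: cox_def vex_def)
    thus ?thesis using Dj[OF h(1)] assms(3) h(2) by simp
  next
    assume h: "J < i" "i \<le> 2*J" "i - J \<in> {1..J}" "phx J a i = - a (i - J)"
    have "cox J d0 d dm1 i = d (i - J)" "vex J w0 wp wm1 i = (\<lambda>x. cnj (wp (i - J) x))"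
      using h by (auto simp add: cox_def vex_def)
    thus ?thesis using Dj[OF h(3)] assms(3) h(4) by simp
  next
    assume h: "i = 2*J+1" "phx J a i = pi"
    have "cox J d0 d dm1 i = dm1" "vex J w0 wp wm1 i = wm1" using h by (simp_all add: cox_def vex_def)
    thus ?thesis using Dm assms(3) h(2) by simp
  qed
qed

lemma cis_inj_range:
  assumes "- pi < x" "x \<le> pi" "- pi < y" "y \<le> pi" "cis x = cis y"
  shows "x = y"
  using cis_Arg_unique[OF sgn_cis assms(1,2)] cis_Arg_unique[OF sgn_cis assms(3,4)] assms(5) by metis

lemma orthoT:
  assumes U: "unitary_mat n U" and S: "spectral_decomp n U \<psi> d0 w0 J d a wp dm1 wm1"
    and i: "i \<le> 2*J+1" and j: "j \<le> 2*J+1"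
    and ci: "cox J d0 d dm1 i \<noteq> 0" and cj: "cox J d0 d dm1 j \<noteq> 0"
  shows "(\<Sum>x<n. cnj (vex J w0 wp wm1 j x) * vex J w0 wp wm1 i x) = (if i = j then 1 else 0)"
proof (cases "i = j")
  case True
  have "vnorm2 n (vex J w0 wp wm1 i) = 1" using comp_eig[OF S i ci] by blast
  hence "complex_of_real (\<Sum>x<n. (cmod (vex J w0 wp wm1 i x))^2) = 1" unfolding vnorm2_def by simp
  hence "(\<Sum>x<n. vex J w0 wp wm1 i x * cnj (vex J w0 wp wm1 i x)) = 1"
    unfolding of_real_sum complex_norm_square .
  thus ?thesis using True by (simp add: mult.commute)
next
  case False
  have "phx J a i \<noteq> phx J a j" using phx_inj[OF S i j] False by blast
  hence "cis (phx J a i) \<noteq> cis (phx J a j)"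
    using cis_inj_range phx_range[OF S i] phx_range[OF S j] by blast
  hence "(\<Sum>y<n. cnj (vex J w0 wp wm1 j y) * vex J w0 wp wm1 i y) = 0"
    by (rule eig_orth[OF U conjunct1[OF comp_eig[OF S i ci]] conjunct1[OF comp_eig[OF S j cj]]]) simp
  thus ?thesis using False by simp
qed

definition qz :: "(real \<Rightarrow> nat \<Rightarrow> complex) \<Rightarrow> (nat \<Rightarrow> real) \<Rightarrow> nat \<Rightarrow> real \<Rightarrow> real" where
  "qz \<phi> dec m \<alpha> = (\<Sum>b\<in>{b. b < m \<and> dec b = 0}. (cmod (\<phi> \<alpha> b))^2)"

lemma split_m:
  fixes f :: "nat \<Rightarrow> real"
  shows "(\<Sum>b<m. f b) = (\<Sum>b\<in>{b. b < m \<and> P b}. f b) + (\<Sum>b\<in>{b. b < m \<and> \<not> P b}. f b)"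
proof -
  have "{..<m} = {b. b < m \<and> P b} \<union> {b. b < m \<and> \<not> P b}" by auto
  hence "(\<Sum>b<m. f b) = (\<Sum>b\<in>{b. b < m \<and> P b} \<union> {b. b < m \<and> \<not> P b}. f b)" by simp
  also have "\<dots> = (\<Sum>b\<in>{b. b < m \<and> P b}. f b) + (\<Sum>b\<in>{b. b < m \<and> \<not> P b}. f b)"
    by (rule sum.union_disjoint) auto
  finally show ?thesis .
qed

lemma qz_props:
  assumes E: "estimate_spec m \<phi> dec \<Delta>"
  shows "0 \<le> qz \<phi> dec m \<alpha>" "qz \<phi> dec m \<alpha> \<le> 1" "qz \<phi> dec m 0 = 1"
    "- pi < \<alpha> \<Longrightarrow> \<alpha> \<le> pi \<Longrightarrow> \<Delta> \<le> \<bar>\<alpha>\<bar> \<Longrightarrow> qz \<phi> dec m \<alpha> \<le> 1/3"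
proof -
  have tot: "\<And>\<alpha>. (\<Sum>b<m. (cmod (\<phi> \<alpha> b))^2) = 1"
    and z: "(\<Sum>b\<in>{b. b < m \<and> dec b \<noteq> 0}. (cmod (\<phi> 0 b))^2) = 0"
    and near: "\<And>\<alpha>. - pi < \<alpha> \<and> \<alpha> \<le> pi \<longrightarrow>
        (\<Sum>b\<in>{b. b < m \<and> phase_dist (dec b) \<alpha> < \<Delta>}. (cmod (\<phi> \<alpha> b))^2) \<ge> 2/3"
    using E unfolding estimate_spec_def by blast+
  have sp: "\<And>\<alpha>. 1 = qz \<phi> dec m \<alpha> + (\<Sum>b\<in>{b. b < m \<and> dec b \<noteq> 0}. (cmod (\<phi> \<alpha> b))^2)"
    unfolding qz_def using split_m[of "\<lambda>b. (cmod (\<phi> _ b))^2" m "\<lambda>b. dec b = 0"] tot by simp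
  have nn: "\<And>\<alpha>. 0 \<le> (\<Sum>b\<in>{b. b < m \<and> dec b \<noteq> 0}. (cmod (\<phi> \<alpha> b))^2)" by (rule sum_nonneg) simp
  show "0 \<le> qz \<phi> dec m \<alpha>" unfolding qz_def by (rule sum_nonneg) simp
  show "qz \<phi> dec m \<alpha> \<le> 1" using sp[of \<alpha>] nn[of \<alpha>] by linarith
  show "qz \<phi> dec m 0 = 1" using sp[of 0] z by linarith
  assume r: "- pi < \<alpha>" "\<alpha> \<le> pi" "\<Delta> \<le> \<bar>\<alpha>\<bar>"
  have pd: "phase_dist 0 \<alpha> = \<bar>\<alpha>\<bar>"
  proof (cases "\<alpha> = pi")
    case True
    have "cis (0 - \<alpha>) = cis pi" using True by (simp add: complex_eq_iff)
    moreover have "Arg (cis pi) = pi" by (rule cis_Arg_unique[OF sgn_cis]) auto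
    ultimately show ?thesis unfolding phase_dist_def using True by simp
  next
    case False
    have "Arg (cis (- \<alpha>)) = - \<alpha>" by (rule cis_Arg_unique[OF sgn_cis]) (use r False in auto)
    thus ?thesis unfolding phase_dist_def by simp
  qed
  let ?N = "{b. b < m \<and> phase_dist (dec b) \<alpha> < \<Delta>}"
  let ?f = "\<lambda>b. (cmod (\<phi> \<alpha> b))^2"
  have sp2: "1 = (\<Sum>b\<in>?N. ?f b) + (\<Sum>b\<in>{b. b < m \<and> \<not> phase_dist (dec b) \<alpha> < \<Delta>}. ?f b)"
    using split_m[of ?f m "\<lambda>b. phase_dist (dec b) \<alpha> < \<Delta>"] tot by simp
  have "qz \<phi> dec m \<alpha> \<le> (\<Sum>b\<in>{b. b < m \<and> \<not> phase_dist (dec b) \<alpha> < \<Delta>}. ?f b)"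
    unfolding qz_def by (rule sum_mono2) (use pd r in auto)
  thus "qz \<phi> dec m \<alpha> \<le> 1/3" using sp2 near[of \<alpha>] r by linarith
qed

lemma acc_sum:
  assumes E: "estimate_spec m \<phi> dec \<Delta>"
  shows "(\<Sum>s\<in>{s \<in> PiE {..<k} (\<lambda>_. {..<m}). \<exists>i<k. dec (s i) \<noteq> 0}. (cmod (phase_prod \<phi> k \<alpha> s))^2)
     = 1 - (qz \<phi> dec m \<alpha>)^k"
proof -
  let ?Z = "{b. b < m \<and> dec b = 0}"
  let ?f = "\<lambda>b. (cmod (\<phi> \<alpha> b))^2"
  have tot: "(\<Sum>b<m. ?f b) = 1" using E unfolding estimate_spec_def by blast
  have eqs: "{s \<in> PiE {..<k} (\<lambda>_. {..<m}). \<exists>i<k. dec (s i) \<noteq> 0}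
      = PiE {..<k} (\<lambda>_. {..<m}) - PiE {..<k} (\<lambda>_. ?Z)"
    unfolding set_eq_iff Diff_iff mem_Collect_eq PiE_iff lessThan_iff by blast
  have sub: "PiE {..<k} (\<lambda>_. ?Z) \<subseteq> PiE {..<k} (\<lambda>_. {..<m})" by (auto simp: PiE_iff)
  have fin: "finite (PiE {..<k} (\<lambda>_. {..<m}))" by (rule finite_PiE) simp_all
  have pp: "\<And>s. (cmod (phase_prod \<phi> k \<alpha> s))^2 = (\<Prod>l<k. ?f (s l))"
    unfolding phase_prod_def prod_norm[symmetric] by (simp add: prod_power_distrib)
  have "(\<Sum>s\<in>PiE {..<k} (\<lambda>_. {..<m}) - PiE {..<k} (\<lambda>_. ?Z). (cmod (phase_prod \<phi> k \<alpha> s))^2)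
     = (\<Sum>s\<in>PiE {..<k} (\<lambda>_. {..<m}). \<Prod>l<k. ?f (s l)) - (\<Sum>s\<in>PiE {..<k} (\<lambda>_. ?Z). \<Prod>l<k. ?f (s l))"
    unfolding pp by (rule sum_diff[OF fin sub])
  also have "\<dots> = 1 - (qz \<phi> dec m \<alpha>)^k"
    using prod_PiE_pow[where g="?f" and B="{..<m}" and k=k] prod_PiE_pow[where g="?f" and B="?Z" and k=k] tot
    unfolding qz_def by simp
  finally show ?thesis unfolding eqs .
qed

lemma pow_third_le:
  assumes "0 < \<epsilon>" "\<epsilon> < 1"
  shows "(1/3::real) ^ nat \<lceil>ln (1 / \<epsilon>)\<rceil> \<le> \<epsilon>"
proof -
  let ?k = "nat \<lceil>ln (1 / \<epsilon>)\<rceil>"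
  have e: "1/3 \<le> exp (-1::real)"
  proof -
    have "exp (-1::real) = 1 / exp 1" by (simp add: exp_minus field_simps)
    moreover have "1 / 3 \<le> 1 / exp (1::real)" using exp_le by (intro divide_left_mono) auto
    ultimately show ?thesis by simp
  qed
  have "(1/3::real) ^ ?k \<le> exp (-1) ^ ?k" by (rule power_mono[OF e]) simp
  also have "\<dots> = exp (real ?k * (-1))" by (rule exp_of_nat_mult[symmetric])
  also have "\<dots> \<le> exp (- ln (1 / \<epsilon>))"
    using real_nat_ceiling_ge[of "ln (1 / \<epsilon>)"] by simp
  also have "\<dots> = \<epsilon>" using assms by (simp add: ln_div)
  finally show ?thesis .
qed

lemma main1:
  assumes U: "unitary_mat n U" and N1: "vnorm2 n \<psi> \<le> 1"
    and S: "spectral_decomp n U \<psi> d0 w0 J d a wp dm1 wm1"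
    and Dp: "0 < \<Delta>" and E: "estimate_spec m \<phi> dec \<Delta>"
    and e0: "0 < \<epsilon>" and e1: "\<epsilon> < 1" and Q: "QH_tail J d a dm1 d0 (1 / \<Delta>) \<le> \<epsilon>"
  defines "k \<equiv> nat \<lceil>ln (1 / \<epsilon>)\<rceil>"
  defines "P \<equiv> detect_accept_prob n m dec \<phi> k d0 w0 J d a wp dm1 wm1"
  shows "\<bar>P - (vnorm2 n \<psi> - d0^2)\<bar> \<le> 2 * \<epsilon> \<and> (\<bar>d0\<bar> = sqrt (vnorm2 n \<psi>) \<longrightarrow> P = 0)"
proof -
  define I where "I = {..2*J+1}"
  define co where "co = cox J d0 d dm1"
  define ve where "ve = vex J w0 wp wm1"
  define ph where "ph = phx J a"
  define q where "q = qz \<phi> dec m"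
  define T where "T = {i \<in> I. co i \<noteq> 0}"
  have finI: "finite I" and finT: "finite T" and TI: "T \<subseteq> I" unfolding I_def T_def by auto
  have orth: "\<And>i j. i \<in> T \<Longrightarrow> j \<in> T \<Longrightarrow> (\<Sum>x<n. cnj (ve j x) * ve i x) = (if i = j then 1 else 0)"
    unfolding T_def I_def ve_def co_def using orthoT[OF U S] by auto
  have psi_eq: "\<And>x. x < n \<Longrightarrow> \<psi> x = (\<Sum>i\<in>T. complex_of_real (co i) * ve i x)"
  proof -
    fix x assume x: "x < n"
    have "(\<Sum>i\<in>I. complex_of_real (co i) * ve i x) =
       of_real d0 * w0 x + (\<Sum>j\<in>{1..J}. of_real (d j) * wp j x + of_real (d j) * cnj (wp j x)) + of_real dm1 * wm1 x"
      unfolding I_def co_def ve_def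
      using reidx[where G="\<lambda>c w \<alpha>. complex_of_real c * w x" and J=J and dz=d0 and d=d and dmo=dm1
          and wz=w0 and wp=wp and wmo=wm1 and a=a] by simp
    also have "\<dots> = \<psi> x" using S x unfolding spectral_decomp_def by (simp add: distrib_left)
    finally have "\<psi> x = (\<Sum>i\<in>I. complex_of_real (co i) * ve i x)" by simp
    also have "\<dots> = (\<Sum>i\<in>T. complex_of_real (co i) * ve i x)"
      by (rule sum.mono_neutral_right[OF finI TI]) (auto simp: T_def)
    finally show "\<psi> x = (\<Sum>i\<in>T. complex_of_real (co i) * ve i x)" .
  qed
  have normT: "vnorm2 n \<psi> = (\<Sum>i\<in>T. (co i)^2)"
  proof -
    have "vnorm2 n \<psi> = (\<Sum>x<n. (cmod (\<Sum>i\<in>T. complex_of_real (co i) * ve i x))^2)"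
      unfolding vnorm2_def using psi_eq by (intro sum.cong) auto
    also have "\<dots> = (\<Sum>i\<in>T. (cmod (complex_of_real (co i)))^2)"
      by (rule pyth[OF finT orth])
    also have "\<dots> = (\<Sum>i\<in>T. (co i)^2)" by simp
    finally show ?thesis .
  qed
  have normI: "vnorm2 n \<psi> = (\<Sum>i\<in>I. (co i)^2)"
    unfolding normT by (rule sum.mono_neutral_left[OF finI TI]) (auto simp: T_def)
  define Acc where "Acc = {s \<in> PiE {..<k} (\<lambda>_. {..<m}). \<exists>i<k. dec (s i) \<noteq> 0}"
  have finAcc: "finite Acc" unfolding Acc_def by (rule finite_subset[OF _ finite_PiE[of "{..<k}" "\<lambda>_. {..<m}"]]) auto
  have amp: "\<And>x s. detect_amp \<phi> k d0 w0 J d a wp dm1 wm1 x s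
      = (\<Sum>i\<in>T. (complex_of_real (co i) * phase_prod \<phi> k (ph i) s) * ve i x)"
  proof -
    fix x s
    have "(\<Sum>i\<in>I. complex_of_real (co i) * ve i x * phase_prod \<phi> k (ph i) s) =
       of_real d0 * w0 x * phase_prod \<phi> k 0 s
       + (\<Sum>j\<in>{1..J}. of_real (d j) * wp j x * phase_prod \<phi> k (a j) s
              + of_real (d j) * cnj (wp j x) * phase_prod \<phi> k (- a j) s)
       + of_real dm1 * wm1 x * phase_prod \<phi> k pi s"
      unfolding I_def co_def ve_def ph_def
      using reidx[where G="\<lambda>c w \<alpha>. complex_of_real c * w x * phase_prod \<phi> k \<alpha> s" and J=J and dz=d0 and d=d and dmo=dm1
          and wz=w0 and wp=wp and wmo=wm1 and a=a] by simp
    also have "\<dots> = detect_amp \<phi> k d0 w0 J d a wp dm1 wm1 x s"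
      unfolding detect_amp_def by (simp add: distrib_left mult.assoc)
    finally have "detect_amp \<phi> k d0 w0 J d a wp dm1 wm1 x s = (\<Sum>i\<in>I. complex_of_real (co i) * ve i x * phase_prod \<phi> k (ph i) s)" by simp
    also have "\<dots> = (\<Sum>i\<in>T. complex_of_real (co i) * ve i x * phase_prod \<phi> k (ph i) s)"
      by (rule sum.mono_neutral_right[OF finI TI]) (auto simp: T_def)
    also have "\<dots> = (\<Sum>i\<in>T. (complex_of_real (co i) * phase_prod \<phi> k (ph i) s) * ve i x)"
      by (simp add: mult_ac)
    finally show "?thesis x s" .
  qed
  have Pexp: "P = (\<Sum>i\<in>I. (co i)^2 * (1 - (q (ph i))^k))"
  proof -
    have "P = (\<Sum>x<n. \<Sum>s\<in>Acc. (cmod (detect_amp \<phi> k d0 w0 J d a wp dm1 wm1 x s))^2)"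
      unfolding P_def detect_accept_prob_def Acc_def ..
    also have "\<dots> = (\<Sum>s\<in>Acc. \<Sum>x<n. (cmod (detect_amp \<phi> k d0 w0 J d a wp dm1 wm1 x s))^2)"
      by (rule sum.swap)
    also have "\<dots> = (\<Sum>s\<in>Acc. \<Sum>i\<in>T. (cmod (complex_of_real (co i) * phase_prod \<phi> k (ph i) s))^2)"
      unfolding amp by (intro sum.cong refl pyth[OF finT orth])
    also have "\<dots> = (\<Sum>i\<in>T. \<Sum>s\<in>Acc. (co i)^2 * (cmod (phase_prod \<phi> k (ph i) s))^2)"
      by (subst sum.swap) (simp add: norm_mult power_mult_distrib)
    also have "\<dots> = (\<Sum>i\<in>T. (co i)^2 * (1 - (q (ph i))^k))"
      unfolding sum_distrib_left[symmetric] Acc_def q_def acc_sum[OF E] ..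
    also have "\<dots> = (\<Sum>i\<in>I. (co i)^2 * (1 - (q (ph i))^k))"
      by (rule sum.mono_neutral_left[OF finI TI]) (auto simp: T_def)
    finally show ?thesis .
  qed
  define R where "R = I - {0}"
  have finR: "finite R" and RI: "R \<subseteq> I" unfolding R_def using finI by auto
  have zI: "0 \<in> I" unfolding I_def by simp
  have co0: "co 0 = d0" and ph0: "ph 0 = 0" unfolding co_def ph_def cox_def phx_def by simp_all
  have q0: "q 0 = 1" unfolding q_def by (rule qz_props(3)[OF E])
  have qn: "\<And>\<alpha>. 0 \<le> q \<alpha>" "\<And>\<alpha>. q \<alpha> \<le> 1" unfolding q_def using qz_props[OF E] by auto
  have PR: "P = (\<Sum>i\<in>R. (co i)^2 * (1 - (q (ph i))^k))"
    unfolding Pexp R_def using sum.remove[OF finI zI, of "\<lambda>i. (co i)^2 * (1 - (q (ph i))^k)"]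
    by (simp add: ph0 q0)
  have NR: "vnorm2 n \<psi> - d0^2 = (\<Sum>i\<in>R. (co i)^2)"
    unfolding normI R_def using sum.remove[OF finI zI, of "\<lambda>i. (co i)^2"] by (simp add: co0)
  have diff: "(vnorm2 n \<psi> - d0^2) - P = (\<Sum>i\<in>R. (co i)^2 * (q (ph i))^k)"
    unfolding PR NR sum_subtractf[symmetric] by (simp add: algebra_simps)
  have dnn: "0 \<le> (\<Sum>i\<in>R. (co i)^2 * (q (ph i))^k)"
    by (rule sum_nonneg) (use qn in simp)
  define h where "h i = (if ph i \<noteq> 0 \<and> \<bar>ph i\<bar> < \<Delta> then (co i)^2 else 0)" for i
  have third: "(1/3::real) ^ k \<le> \<epsilon>" unfolding k_def by (rule pow_third_le[OF e0 e1])
  have termb: "\<And>i. i \<in> R \<Longrightarrow> (co i)^2 * (q (ph i))^k \<le> (co i)^2 * \<epsilon> + h i"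
  proof -
    fix i assume iR: "i \<in> R"
    hence iI: "i \<le> 2*J+1" and i0: "i \<noteq> 0" unfolding R_def I_def by auto
    have phn: "ph i \<noteq> 0"
    proof
      assume "ph i = 0"
      hence "phx J a i = phx J a 0" by (simp add: ph_def phx_def)
      from phx_inj[OF S iI _ this] i0 show False by simp
    qed
    have c2: "0 \<le> (co i)^2" by simp
    have qk1: "(q (ph i))^k \<le> 1" using qn by (simp add: power_le_one)
    show "(co i)^2 * (q (ph i))^k \<le> (co i)^2 * \<epsilon> + h i"
    proof (cases "\<bar>ph i\<bar> < \<Delta>")
      case True
      hence "h i = (co i)^2" using phn by (simp add: h_def)
      moreover have "(co i)^2 * (q (ph i))^k \<le> (co i)^2" using mult_left_mono[OF qk1 c2] by simp
      moreover have "0 \<le> (co i)^2 * \<epsilon>" using e0 by simp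
      ultimately show ?thesis by linarith
    next
      case False
      have "q (ph i) \<le> 1/3" unfolding q_def ph_def
        by (rule qz_props(4)[OF E]) (use phx_range[OF S iI] False in \<open>auto simp: ph_def\<close>)
      hence "(q (ph i))^k \<le> (1/3)^k" using qn by (intro power_mono) auto
      hence "(q (ph i))^k \<le> \<epsilon>" using third by linarith
      hence "(co i)^2 * (q (ph i))^k \<le> (co i)^2 * \<epsilon>" using c2 by (rule mult_left_mono)
      moreover have "0 \<le> h i" by (simp add: h_def)
      ultimately show ?thesis by linarith
    qed
  qed
  have hI: "(\<Sum>i\<in>R. h i) = (\<Sum>i\<in>I. h i)"
    unfolding R_def using sum.remove[OF finI zI, of h] by (simp add: h_def ph0)
  have A: "\<And>j. j \<in> {1..J} \<Longrightarrow> 0 < a j \<and> a j < pi" using S unfolding spectral_decomp_def by blast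
  have hQ: "(\<Sum>i\<in>I. h i) = QH_tail J d a dm1 d0 (1 / \<Delta>)"
  proof -
    have "(\<Sum>i\<in>I. h i) = (if (0::real) \<noteq> 0 \<and> \<bar>0::real\<bar> < \<Delta> then d0^2 else 0)
        + (\<Sum>j\<in>{1..J}. (if a j \<noteq> 0 \<and> \<bar>a j\<bar> < \<Delta> then (d j)^2 else 0)
             + (if - a j \<noteq> 0 \<and> \<bar>- a j\<bar> < \<Delta> then (d j)^2 else 0))
        + (if pi \<noteq> 0 \<and> \<bar>pi\<bar> < \<Delta> then dm1^2 else 0)"
      unfolding I_def h_def co_def ph_def
      using reidx[where G="\<lambda>c w \<alpha>. if \<alpha> \<noteq> 0 \<and> \<bar>\<alpha>\<bar> < \<Delta> then c^2 else (0::real)" and J=J and dz=d0 and d=d and dmo=dm1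
          and wz=w0 and wp=wp and wmo=wm1 and a=a] by simp
    also have "\<dots> = (\<Sum>j\<in>{1..J}. if 1 / \<Delta> < 1 / a j then 2 * (d j)^2 else 0)
        + (if 1 / \<Delta> < 1 / pi then dm1^2 else 0)"
    proof -
      have s1: "(\<Sum>j\<in>{1..J}. (if a j \<noteq> 0 \<and> \<bar>a j\<bar> < \<Delta> then (d j)^2 else 0)
             + (if - a j \<noteq> 0 \<and> \<bar>- a j\<bar> < \<Delta> then (d j)^2 else 0))
          = (\<Sum>j\<in>{1..J}. if 1 / \<Delta> < 1 / a j then 2 * (d j)^2 else 0)"
      proof (rule sum.cong[OF refl])
        fix j assume "j \<in> {1..J}"
        hence aj: "0 < a j" using A by blast
        hence "(1 / \<Delta> < 1 / a j) = (a j < \<Delta>)" using Dp by (simp add: field_simps)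
        thus "(if a j \<noteq> 0 \<and> \<bar>a j\<bar> < \<Delta> then (d j)^2 else 0)
             + (if - a j \<noteq> 0 \<and> \<bar>- a j\<bar> < \<Delta> then (d j)^2 else 0)
             = (if 1 / \<Delta> < 1 / a j then 2 * (d j)^2 else 0)" using aj by simp
      qed
      have "(1 / \<Delta> < 1 / pi) = (pi < \<Delta>)" using Dp pi_gt_zero by (simp add: field_simps)
      hence s2: "(if pi \<noteq> 0 \<and> \<bar>pi\<bar> < \<Delta> then dm1^2 else 0) = (if 1 / \<Delta> < 1 / pi then dm1^2 else 0)"
        by simp
      show ?thesis unfolding s1 s2 by simp
    qed
    also have "\<dots> = QH_tail J d a dm1 d0 (1 / \<Delta>)"
    proof -
      have "(\<Sum>j\<in>{j \<in> {1..J}. 1 / a j > 1 / \<Delta>}. 2 * (d j)^2) = (\<Sum>j\<in>{1..J}. if 1 / \<Delta> < 1 / a j then 2 * (d j)^2 else 0)"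
        by (rule sum.inter_filter) simp
      thus ?thesis unfolding QH_tail_def using Dp by simp
    qed
    finally show ?thesis .
  qed
  have RN: "(\<Sum>i\<in>R. (co i)^2) \<le> 1" using NR N1 by (smt (verit) zero_le_power2)
  have "(\<Sum>i\<in>R. (co i)^2 * (q (ph i))^k) \<le> (\<Sum>i\<in>R. (co i)^2 * \<epsilon> + h i)"
    by (rule sum_mono) (rule termb)
  also have "\<dots> = (\<Sum>i\<in>R. (co i)^2) * \<epsilon> + QH_tail J d a dm1 d0 (1 / \<Delta>)"
    unfolding sum.distrib sum_distrib_right[symmetric] hI hQ ..
  also have "\<dots> \<le> 1 * \<epsilon> + \<epsilon>" using RN Q e0 by (intro add_mono mult_right_mono) auto
  finally have bnd: "(\<Sum>i\<in>R. (co i)^2 * (q (ph i))^k) \<le> 2 * \<epsilon>" by simp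
  have part1: "\<bar>P - (vnorm2 n \<psi> - d0^2)\<bar> \<le> 2 * \<epsilon>" using diff dnn bnd by linarith
  have part2: "\<bar>d0\<bar> = sqrt (vnorm2 n \<psi>) \<longrightarrow> P = 0"
  proof
    assume h0: "\<bar>d0\<bar> = sqrt (vnorm2 n \<psi>)"
    have nn: "0 \<le> vnorm2 n \<psi>" unfolding vnorm2_def by (rule sum_nonneg) simp
    have "d0^2 = vnorm2 n \<psi>" using h0 nn by (metis power2_abs real_sqrt_pow2)
    hence "(\<Sum>i\<in>R. (co i)^2) = 0" using NR by simp
    hence z: "\<forall>i\<in>R. (co i)^2 = 0" using sum_nonneg_eq_0_iff[OF finR, of "\<lambda>i. (co i)^2"] by simp
    show "P = 0" unfolding PR using z by simp
  qed
  show ?thesis using part1 part2 by blast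
qed

lemma main2:
  assumes Dp: "0 < \<Delta>" and e0: "0 < \<epsilon>" and e1: "\<epsilon> \<le> 1/2" and c: "real calls \<le> K / \<Delta>"
  shows "real (nat \<lceil>1 * ln (1 / \<epsilon>)\<rceil> * calls) \<le> ((1 + 1 / ln 2) * max K 0) * ln (1 / \<epsilon>) / \<Delta>"
proof -
  define L where "L = ln (1 / \<epsilon>)"
  have l2: "0 < ln (2::real)" by simp
  have "2 \<le> 1 / \<epsilon>" using e0 e1 by (simp add: field_simps)
  hence L2: "ln 2 \<le> L" unfolding L_def by (rule ln_mono) simp_all
  hence Lp: "0 < L" using l2 by linarith
  have k1: "real (nat \<lceil>L\<rceil>) \<le> L + 1" using Lp by linarith
  have "1 \<le> L / ln 2" using L2 l2 by (simp add: field_simps)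
  hence "L + 1 \<le> (1 + 1 / ln 2) * L" using Lp by (simp add: field_simps)
  hence k2: "real (nat \<lceil>L\<rceil>) \<le> (1 + 1 / ln 2) * L" using k1 by linarith
  have c2: "real calls \<le> max K 0 / \<Delta>"
    using c Dp by (smt (verit) divide_right_mono max.cobounded1)
  have "real (nat \<lceil>L\<rceil> * calls) = real (nat \<lceil>L\<rceil>) * real calls" by simp
  also have "\<dots> \<le> ((1 + 1 / ln 2) * L) * (max K 0 / \<Delta>)"
    by (rule mult_mono[OF k2 c2]) (use Lp l2 in auto)
  also have "\<dots> = ((1 + 1 / ln 2) * max K 0) * L / \<Delta>" by simp
  finally show ?thesis unfolding L_def by simp
qed

theorem lemma1:
  shows "\<exists>c0::real. c0 > 0 \<and> (\<exists>C::real.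
     (\<forall>(n::nat) (m::nat) (U::nat \<Rightarrow> nat \<Rightarrow> complex) (\<psi>::nat \<Rightarrow> complex)
        (d0::real) (w0::nat \<Rightarrow> complex) (J::nat) (d::nat \<Rightarrow> real) (a::nat \<Rightarrow> real)
        (wp::nat \<Rightarrow> nat \<Rightarrow> complex) (dm1::real) (wm1::nat \<Rightarrow> complex)
        (\<phi>::real \<Rightarrow> nat \<Rightarrow> complex) (dec::nat \<Rightarrow> real) (\<Delta>::real) (\<epsilon>::real).
        unitary_mat n U \<and> real_mat n U \<and> real_vec n \<psi> \<and> vnorm2 n \<psi> \<le> 1 \<and>
        spectral_decomp n U \<psi> d0 w0 J d a wp dm1 wm1 \<and>
        0 < \<Delta> \<and> estimate_spec m \<phi> dec \<Delta> \<and>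
        0 < \<epsilon> \<and> \<epsilon> < 1 \<and> QH_tail J d a dm1 d0 (1 / \<Delta>) \<le> \<epsilon> \<longrightarrow>
        (let k = nat \<lceil>c0 * ln (1 / \<epsilon>)\<rceil>;
             P = detect_accept_prob n m dec \<phi> k d0 w0 J d a wp dm1 wm1
         in \<bar>P - (vnorm2 n \<psi> - d0^2)\<bar> \<le> C * \<epsilon> \<and>
            (\<bar>d0\<bar> = sqrt (vnorm2 n \<psi>) \<longrightarrow> P = 0))) \<and>
     (\<forall>K::real. \<exists>C'::real. \<forall>(\<Delta>::real) (\<epsilon>::real) (calls::nat).
        0 < \<Delta> \<and> 0 < \<epsilon> \<and> \<epsilon> \<le> 1/2 \<and> real calls \<le> K / \<Delta> \<longrightarrow>
        real (nat \<lceil>c0 * ln (1 / \<epsilon>)\<rceil> * calls) \<le> C' * ln (1 / \<epsilon>) / \<Delta>))"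
proof -
  have P1: "\<forall>(n::nat) (m::nat) (U::nat \<Rightarrow> nat \<Rightarrow> complex) (\<psi>::nat \<Rightarrow> complex)
        (d0::real) (w0::nat \<Rightarrow> complex) (J::nat) (d::nat \<Rightarrow> real) (a::nat \<Rightarrow> real)
        (wp::nat \<Rightarrow> nat \<Rightarrow> complex) (dm1::real) (wm1::nat \<Rightarrow> complex)
        (\<phi>::real \<Rightarrow> nat \<Rightarrow> complex) (dec::nat \<Rightarrow> real) (\<Delta>::real) (\<epsilon>::real).
        unitary_mat n U \<and> real_mat n U \<and> real_vec n \<psi> \<and> vnorm2 n \<psi> \<le> 1 \<and>
        spectral_decomp n U \<psi> d0 w0 J d a wp dm1 wm1 \<and>
        0 < \<Delta> \<and> estimate_spec m \<phi> dec \<Delta> \<and>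
        0 < \<epsilon> \<and> \<epsilon> < 1 \<and> QH_tail J d a dm1 d0 (1 / \<Delta>) \<le> \<epsilon> \<longrightarrow>
        (let k = nat \<lceil>1 * ln (1 / \<epsilon>)\<rceil>;
             P = detect_accept_prob n m dec \<phi> k d0 w0 J d a wp dm1 wm1
         in \<bar>P - (vnorm2 n \<psi> - d0^2)\<bar> \<le> 2 * \<epsilon> \<and>
            (\<bar>d0\<bar> = sqrt (vnorm2 n \<psi>) \<longrightarrow> P = 0))"
    apply (intro allI impI)
    apply (elim conjE)
    apply (simp only: Let_def mult_1)
    apply (rule main1)
           apply assumption+
    done
  have P2: "\<forall>K::real. \<exists>C'::real. \<forall>(\<Delta>::real) (\<epsilon>::real) (calls::nat).
        0 < \<Delta> \<and> 0 < \<epsilon> \<and> \<epsilon> \<le> 1/2 \<and> real calls \<le> K / \<Delta> \<longrightarrow>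
        real (nat \<lceil>1 * ln (1 / \<epsilon>)\<rceil> * calls) \<le> C' * ln (1 / \<epsilon>) / \<Delta>"
  proof
    fix K :: real
    show "\<exists>C'::real. \<forall>(\<Delta>::real) (\<epsilon>::real) (calls::nat).
        0 < \<Delta> \<and> 0 < \<epsilon> \<and> \<epsilon> \<le> 1/2 \<and> real calls \<le> K / \<Delta> \<longrightarrow>
        real (nat \<lceil>1 * ln (1 / \<epsilon>)\<rceil> * calls) \<le> C' * ln (1 / \<epsilon>) / \<Delta>"
      by (rule exI[of _ "(1 + 1 / ln 2) * max K 0"]) (blast intro: main2)
  qed
  show ?thesis
    apply (rule exI[of _ "1::real"])
    apply (intro conjI)
     apply simp
    apply (rule exI[of _ "2::real"])
    using P1 P2 by blast
qed

end
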